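(* Let $X$ be a locally path connected and semilocally simply connected space. Then the CO' topology and the UC topology on $\Pi_1(X)$ coincide.
   Context: For a space $X$, $\mathcal P X=C([0,1],X)$ is the set of paths, with the compact-open topology. For paths $\gamma,\eta$ with $\gamma(0)=\eta(1)$, $\gamma\,\Box\,\eta$ denotes the concatenated path which first traverses $\eta$ and then $\gamma$; $[\gamma]$ denotes the endpoint-fixing path-homotopy class of $\gamma$, and $\Pi_1(X)$ is the set of all such classes (the fundamental groupoid). A subset $V\subseteq X$ is relatively inessential if for $x\in V$ the homomorphism $\pi_1(V,x)\to\pi_1(X,x)$ induced by inclusion is trivial; $X$ is semilocally simply connected if every point has a relatively inessential neighbourhood. The CO' topology on $\Pi_1(X)$ is the quotient topology induced from the compact-open topology on $\mathcal P X$ by $q\colon\gamma\mapsto[\gamma]$. For $[\gamma]\in\Pi_1(X)$ and open sets $U\ni\gamma(1)$, $V\ni\gamma(0)$, let $N([\gamma],U,V)=\{[\delta\,\Box\,\gamma\,\Box\,\theta] : \delta\text{ a path in }U\text{ with }\delta(0)=\gamma(1),\ \theta\text{ a path in }V\text{ with }\theta(1)=\gamma(0)\}$. The UC topology on $\Pi_1(X)$ is the topology generated by the sets $N([\gamma],U,V)$ with $U,V$ path connected relatively inessential open neighbourhoods of $\gamma(1)$, $\gamma(0)$. *)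

theory Defs
  imports "HOL-Analysis.Analysis"
begin

text \<open>Concatenation: \<open>pcomp \<gamma> \<eta>\<close> is \<gamma> \<box> \<eta>, which first traverses \<eta> and then \<gamma>.\<close>
definition pcomp :: "(real \<Rightarrow> 'a) \<Rightarrow> (real \<Rightarrow> 'a) \<Rightarrow> real \<Rightarrow> 'a" where
  "pcomp \<gamma> \<eta> = (\<lambda>t. if t \<le> 1/2 then \<eta> (2 * t) else \<gamma> (2 * t - 1))"

definition paths :: "'a topology \<Rightarrow> (real \<Rightarrow> 'a) set" where
  "paths X = {g. pathin X g}"

definition path_homotopic :: "'a topology \<Rightarrow> (real \<Rightarrow> 'a) \<Rightarrow> (real \<Rightarrow> 'a) \<Rightarrow> bool" where
  "path_homotopic X p q \<longleftrightarrow>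
     homotopic_with (\<lambda>r. r 0 = p 0 \<and> r 1 = p 1) (top_of_set {0..1}) X p q"

definition pclass :: "'a topology \<Rightarrow> (real \<Rightarrow> 'a) \<Rightarrow> (real \<Rightarrow> 'a) set" where
  "pclass X g = {h. pathin X h \<and> path_homotopic X g h}"

definition Pi1 :: "'a topology \<Rightarrow> (real \<Rightarrow> 'a) set set" where
  "Pi1 X = pclass X ` paths X"

definition rel_inessential :: "'a topology \<Rightarrow> 'a set \<Rightarrow> bool" where
  "rel_inessential X V \<longleftrightarrow>
     (\<forall>x\<in>V. \<forall>l. pathin (subtopology X V) l \<and> l 0 = x \<and> l 1 = x
              \<longrightarrow> path_homotopic X l (\<lambda>t. x))"

definition semilocally_simply_connected :: "'a topology \<Rightarrow> bool" where
  "semilocally_simply_connected X \<longleftrightarrow>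
     (\<forall>x\<in>topspace X. \<exists>U V. openin X U \<and> x \<in> U \<and> U \<subseteq> V \<and> V \<subseteq> topspace X
                          \<and> rel_inessential X V)"

definition CO_topology :: "'a topology \<Rightarrow> (real \<Rightarrow> 'a) topology" where
  "CO_topology X = topology_generated_by
     (insert (paths X)
       {{f \<in> paths X. f ` K \<subseteq> U} | K U. compact K \<and> K \<subseteq> {0..1} \<and> openin X U})"

definition quotient_topology :: "'b topology \<Rightarrow> ('b \<Rightarrow> 'c) \<Rightarrow> 'c set \<Rightarrow> 'c topology" where
  "quotient_topology T f Y =
     topology (\<lambda>S. S \<subseteq> Y \<and> openin T {x \<in> topspace T. f x \<in> S})"

lemma istopology_quotient:
  "istopology (\<lambda>S. S \<subseteq> Y \<and> openin T {x \<in> topspace T. f x \<in> S})"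
proof -
  have int: "{x \<in> topspace T. f x \<in> S \<inter> S'} =
             {x \<in> topspace T. f x \<in> S} \<inter> {x \<in> topspace T. f x \<in> S'}" for S S'
    by auto
  have un: "{x \<in> topspace T. f x \<in> \<Union>K} = (\<Union>S\<in>K. {x \<in> topspace T. f x \<in> S})" for K
    by auto
  have "openin T {x \<in> topspace T. f x \<in> S \<inter> S'}"
    if "openin T {x \<in> topspace T. f x \<in> S}" "openin T {x \<in> topspace T. f x \<in> S'}" for S S'
    unfolding int using that by (rule openin_Int)
  moreover have "openin T {x \<in> topspace T. f x \<in> \<Union>K}"
    if "\<forall>S\<in>K. openin T {x \<in> topspace T. f x \<in> S}" for K
    unfolding un using that by (intro openin_Union) auto
  ultimately show ?thesis
    unfolding istopology_def by blast
qed

definition COq_topology :: "'a topology \<Rightarrow> (real \<Rightarrow> 'a) set topology" where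
  "COq_topology X = quotient_topology (CO_topology X) (pclass X) (Pi1 X)"

definition Nset :: "'a topology \<Rightarrow> (real \<Rightarrow> 'a) \<Rightarrow> 'a set \<Rightarrow> 'a set \<Rightarrow> (real \<Rightarrow> 'a) set set" where
  "Nset X \<gamma> U V =
     {pclass X (pcomp \<delta> (pcomp \<gamma> \<theta>)) | \<delta> \<theta>.
        pathin (subtopology X U) \<delta> \<and> \<delta> 0 = \<gamma> 1 \<and>
        pathin (subtopology X V) \<theta> \<and> \<theta> 1 = \<gamma> 0}"

definition UC_topology :: "'a topology \<Rightarrow> (real \<Rightarrow> 'a) set topology" where
  "UC_topology X = topology_generated_by
     (insert (Pi1 X)
       {Nset X \<gamma> U V | \<gamma> U V. pathin X \<gamma> \<and>
          openin X U \<and> \<gamma> 1 \<in> U \<and> path_connectedin X U \<and> rel_inessential X U \<and>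
          openin X V \<and> \<gamma> 0 \<in> V \<and> path_connectedin X V \<and> rel_inessential X V})"

end

theory Submission
  imports Defs
begin

lemma pathin_pcomp:
  assumes p: "pathin X p" and q: "pathin X q" and e: "q 1 = p 0"
  shows "pathin X (pcomp p q)"
proof -
  let ?I = "subtopology euclideanreal {0..1::real}"
  have "continuous_map ?I X (\<lambda>t. if t \<le> 1/2 then q (2*t) else p (2*t-1))"
  proof (rule continuous_map_cases_le)
    show "continuous_map ?I euclideanreal (\<lambda>x. x)"
      by (simp add: continuous_map_from_subtopology)
    show "continuous_map ?I euclideanreal (\<lambda>x. 1/2)" by simp
    have "continuous_map (subtopology ?I {x \<in> topspace ?I. x \<le> 1/2}) ?I (\<lambda>t. 2*t)"
      by (auto simp: continuous_map_in_subtopology intro!: continuous_map_from_subtopology continuous_intros)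
    then show "continuous_map (subtopology ?I {x \<in> topspace ?I. x \<le> 1/2}) X (\<lambda>t. q (2*t))"
      using q unfolding pathin_def by (rule continuous_map_compose[unfolded o_def])
    have "continuous_map (subtopology ?I {x \<in> topspace ?I. 1/2 \<le> x}) ?I (\<lambda>t. 2*t-1)"
      by (auto simp: continuous_map_in_subtopology intro!: continuous_map_from_subtopology continuous_intros)
    then show "continuous_map (subtopology ?I {x \<in> topspace ?I. 1/2 \<le> x}) X (\<lambda>t. p (2*t-1))"
      using p unfolding pathin_def by (rule continuous_map_compose[unfolded o_def])
  next
    fix x assume "x \<in> topspace ?I" "x = 1/2"
    then have x: "2*x = 1" by simp
    show "q (2*x) = p (2*x-1)" using e by (simp add: x)
  qed
  then show ?thesis unfolding pathin_def pcomp_def .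
qed

lemma pcomp_0 [simp]: "pcomp p q 0 = q 0" and pcomp_1 [simp]: "pcomp p q 1 = p 1"
  by (auto simp: pcomp_def)

lemma ph_imp:
  assumes "path_homotopic X p q"
  shows "pathin X p \<and> pathin X q \<and> q 0 = p 0 \<and> q 1 = p 1"
  using homotopic_with_imp_continuous_maps[OF assms[unfolded path_homotopic_def]]
    homotopic_with_imp_property[OF assms[unfolded path_homotopic_def]]
  by (auto simp: pathin_def)

lemma ph_refl: "pathin X p \<Longrightarrow> path_homotopic X p p"
  by (simp add: path_homotopic_def pathin_def)

lemma ph_sym:
  assumes "path_homotopic X p q" shows "path_homotopic X q p"
proof -
  have e: "q 0 = p 0" "q 1 = p 1" using ph_imp[OF assms] by auto
  show ?thesis using homotopic_with_symD[OF assms[unfolded path_homotopic_def]]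
    unfolding path_homotopic_def e .
qed

lemma ph_trans:
  assumes "path_homotopic X p q" "path_homotopic X q r" shows "path_homotopic X p r"
proof -
  have e: "q 0 = p 0" "q 1 = p 1" using ph_imp[OF assms(1)] by auto
  show ?thesis using homotopic_with_trans[OF assms(1)[unfolded path_homotopic_def] assms(2)[unfolded path_homotopic_def e]]
    unfolding path_homotopic_def .
qed

lemma ph_eq01:
  assumes "pathin X p" "\<And>t. t \<in> {0..1} \<Longrightarrow> p t = q t"
  shows "path_homotopic X p q"
  unfolding path_homotopic_def
  by (rule homotopic_with_equal) (use assms in \<open>auto simp: pathin_def\<close>)

lemma ph_reparam:
  assumes p: "pathin X p"
    and f: "pathin (top_of_set {0..1}) \<phi>" and g: "pathin (top_of_set {0..1}) \<psi>"
    and e: "\<phi> 0 = \<psi> 0" "\<phi> 1 = \<psi> 1"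
  shows "path_homotopic X (p \<circ> \<phi>) (p \<circ> \<psi>)"
proof -
  have pf: "path \<phi>" "path \<psi>" "\<phi> ` {0..1} \<subseteq> {0..1}" "\<psi> ` {0..1} \<subseteq> {0..1}"
    using f g by (auto simp: pathin_canon_iff)
  have "homotopic_paths {0..1} \<phi> \<psi>"
  proof (rule homotopic_paths_linear)
    fix t :: real assume t: "t \<in> {0..1}"
    then have "\<phi> t \<in> {0..1}" "\<psi> t \<in> {0..1}" using pf(3,4) by blast+
    then show "closed_segment (\<phi> t) (\<psi> t) \<subseteq> {0..1}"
      by (simp add: closed_segment_subset)
  qed (use pf e in \<open>auto simp: pathstart_def pathfinish_def\<close>)
  then show ?thesis
    unfolding homotopic_paths_def path_homotopic_def
    by (rule homotopic_with_compose_continuous_map_left)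
       (use p in \<open>auto simp: pathin_def pathstart_def pathfinish_def\<close>)
qed

lemma cm_rescale:
  fixes S :: "(real\<times>real) set" and a b :: real
  assumes that: "\<And>y. y \<in> S \<Longrightarrow> y \<in> {0..1}\<times>{0..1} \<Longrightarrow> a * snd y + b \<in> {0..1}"
  shows "continuous_map (subtopology (prod_topology (top_of_set {0..1::real}) (top_of_set {0..1::real})) S) (prod_topology (top_of_set {0..1::real}) (top_of_set {0..1::real})) (\<lambda>y. (fst y, a * snd y + b))"
proof -
  let ?I = "top_of_set {0..1::real}"
  have 1: "continuous_map (subtopology (prod_topology ?I ?I) S) ?I fst"
    by (rule continuous_map_from_subtopology) (rule continuous_map_fst)
  have 2: "continuous_map (subtopology (prod_topology ?I ?I) S) euclideanreal (\<lambda>y. a * snd y + b)"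
    by (intro continuous_intros continuous_map_from_subtopology continuous_map_into_fulltopology[OF continuous_map_snd])
  have 3: "continuous_map (subtopology (prod_topology ?I ?I) S) ?I (\<lambda>y. a * snd y + b)"
    using 2 that by (auto simp: continuous_map_in_subtopology)
  show ?thesis unfolding continuous_map_pairwise o_def using 1 3 by simp
qed

lemma ph_pcomp:
  assumes hp: "path_homotopic X p p'" and hq: "path_homotopic X q q'" and e: "q 1 = p 0"
  shows "path_homotopic X (pcomp p q) (pcomp p' q')"
proof -
  let ?I = "subtopology euclideanreal {0..1::real}"
  let ?II = "prod_topology ?I ?I"
  obtain Hp where cp: "continuous_map ?II X Hp" and hp0: "\<forall>x. Hp (0, x) = p x" and hp1: "\<forall>x. Hp (1, x) = p' x"
    and Pp: "\<forall>t\<in>{0..1}. Hp (t,0) = p 0 \<and> Hp (t,1) = p 1"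
    using hp unfolding path_homotopic_def homotopic_with_def by auto
  obtain Hq where cq: "continuous_map ?II X Hq" and hq0: "\<forall>x. Hq (0, x) = q x" and hq1: "\<forall>x. Hq (1, x) = q' x"
    and Pq: "\<forall>t\<in>{0..1}. Hq (t,0) = q 0 \<and> Hq (t,1) = q 1"
    using hq unfolding path_homotopic_def homotopic_with_def by auto
  define K where "K = (\<lambda>y::real\<times>real. if snd y \<le> 1/2 then Hq (fst y, 2 * snd y + 0) else Hp (fst y, 2 * snd y + (-1)))"
  have cK: "continuous_map ?II X K"
    unfolding K_def
  proof (rule continuous_map_cases_le)
    show "continuous_map ?II euclideanreal snd"
      using continuous_map_snd continuous_map_in_subtopology by blast
    show "continuous_map ?II euclideanreal (\<lambda>x. 1/2)" by simp
    have "continuous_map (subtopology ?II {x \<in> topspace ?II. snd x \<le> 1/2}) ?II (\<lambda>y. (fst y, 2 * snd y + 0))"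
      by (rule cm_rescale) auto
    then show "continuous_map (subtopology ?II {x \<in> topspace ?II. snd x \<le> 1/2}) X (\<lambda>y. Hq (fst y, 2 * snd y + 0))"
      using cq by (rule continuous_map_compose[unfolded o_def])
    have "continuous_map (subtopology ?II {x \<in> topspace ?II. 1/2 \<le> snd x}) ?II (\<lambda>y. (fst y, 2 * snd y + (-1)))"
      by (rule cm_rescale) auto
    then show "continuous_map (subtopology ?II {x \<in> topspace ?II. 1/2 \<le> snd x}) X (\<lambda>y. Hp (fst y, 2 * snd y + (-1)))"
      using cp by (rule continuous_map_compose[unfolded o_def])
  next
    fix y assume "y \<in> topspace ?II" "snd y = 1/2"
    then have y: "2 * snd y = 1" "fst y \<in> {0..1}" by auto
    show "Hq (fst y, 2 * snd y + 0) = Hp (fst y, 2 * snd y + (-1))"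
      using Pp Pq e y by simp
  qed
  show ?thesis
    unfolding path_homotopic_def homotopic_with_def
  proof (intro exI conjI)
    show "continuous_map ?II X K" by (rule cK)
    show "\<forall>x. K (0, x) = pcomp p q x" by (simp add: K_def pcomp_def hp0 hq0)
    show "\<forall>x. K (1, x) = pcomp p' q' x" by (simp add: K_def pcomp_def hp1 hq1)
    show "\<forall>t\<in>{0..1}. (\<lambda>x. K (t, x)) 0 = pcomp p q 0 \<and> (\<lambda>x. K (t, x)) 1 = pcomp p q 1"
      using Pp Pq by (simp add: K_def)
  qed
qed

lemma pathin01_affine:
  fixes a b :: real
  assumes "0 \<le> b" "b \<le> 1" "0 \<le> a + b" "a + b \<le> 1"
  shows "pathin (top_of_set {0..1}) (\<lambda>u. a*u + b)"
proof -
  have "a*u + b \<in> {0..1}" if "u \<in> {0..1}" for u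
  proof -
    have eq: "a*u + b = (1-u)*b + u*(a+b)" by (simp add: algebra_simps)
    have "0 \<le> (1-u)*b + u*(a+b)" using that assms by (auto intro!: add_nonneg_nonneg mult_nonneg_nonneg)
    moreover have "(1-u)*b + u*(a+b) \<le> (1-u)*1 + u*1"
      using that assms by (intro add_mono mult_left_mono) auto
    ultimately show ?thesis by (simp add: eq)
  qed
  moreover have "path (\<lambda>u. a*u + b)"
    unfolding path_def by (intro continuous_intros)
  ultimately show ?thesis by (auto simp: pathin_canon_iff)
qed

lemma ph_reparam_eq:
  assumes p: "pathin X p"
    and f: "pathin (top_of_set {0..1}) \<phi>" and g: "pathin (top_of_set {0..1}) \<psi>"
    and e: "\<phi> 0 = \<psi> 0" "\<phi> 1 = \<psi> 1"
    and F: "\<And>t. t \<in> {0..1} \<Longrightarrow> F t = p (\<phi> t)"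
    and G: "\<And>t. t \<in> {0..1} \<Longrightarrow> G t = p (\<psi> t)"
  shows "path_homotopic X F G"
proof -
  have cp: "continuous_map (top_of_set {0..1}) X p" using p by (simp add: pathin_def)
  have 1: "path_homotopic X (p \<circ> \<phi>) F"
    by (rule ph_eq01) (use pathin_compose[OF f cp] F in auto)
  have 2: "path_homotopic X (p \<circ> \<psi>) G"
    by (rule ph_eq01) (use pathin_compose[OF g cp] G in auto)
  show ?thesis
    by (rule ph_trans[OF ph_sym[OF 1] ph_trans[OF ph_reparam[OF p f g e] 2]])
qed

lemma pathin01_id: "pathin (top_of_set {0..1}) (\<lambda>u. 1*u + (0::real))"
  by (rule pathin01_affine) auto

lemma ph_assoc:
  assumes a: "pathin X a" and b: "pathin X b" and c: "pathin X c"
    and e: "c 1 = b 0" "b 1 = a 0"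
  shows "path_homotopic X (pcomp a (pcomp b c)) (pcomp (pcomp a b) c)"
proof -
  have h: "pathin X (pcomp a (pcomp b c))"
    using a b c e by (intro pathin_pcomp) auto
  let ?A = "\<lambda>u::real. (1/2)*u + 1/2" and ?B = "\<lambda>u::real. (1/4)*u + 1/4" and ?C = "\<lambda>u::real. (1/4)*u + 0"
  have ph: "pathin (top_of_set {0..1}) (pcomp (pcomp ?A ?B) ?C)"
    by (intro pathin_pcomp pathin01_affine) (auto simp: pcomp_def)
  show ?thesis
  proof (rule ph_reparam_eq[OF h pathin01_id ph])
    fix t :: real assume t: "t \<in> {0..1}"
    show "pcomp (pcomp a b) c t = pcomp a (pcomp b c) (pcomp (pcomp ?A ?B) ?C t)"
    proof -
      consider "t \<le> 1/2" | "1/2 < t" "t \<le> 3/4" | "3/4 < t" by linarith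
      then show ?thesis
      proof cases
        case 1 then show ?thesis by (auto simp: pcomp_def field_simps)
      next
        case 2
        then have e1: "pcomp (pcomp ?A ?B) ?C t = t - 1/4" by (auto simp: pcomp_def field_simps)
        have "pcomp (pcomp a b) c t = b (4*t - 2)" using 2 by (auto simp: pcomp_def field_simps)
        moreover have "pcomp a (pcomp b c) (t - 1/4) = b (4*t-2)"
        proof -
          show ?thesis using 2 by (auto simp: pcomp_def field_simps intro!: arg_cong[where f=b])
        qed
        ultimately show ?thesis unfolding e1 by simp
      next
        case 3
        then have e1: "pcomp (pcomp ?A ?B) ?C t = 2*t - 1" by (auto simp: pcomp_def field_simps)
        have "pcomp (pcomp a b) c t = a (4*t - 3)" using 3 by (auto simp: pcomp_def field_simps)
        moreover have "pcomp a (pcomp b c) (2*t - 1) = a (4*t-3)" using 3 by (auto simp: pcomp_def field_simps)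
        ultimately show ?thesis unfolding e1 by simp
      qed
    qed
  qed (auto simp: pcomp_def)
qed

lemma ph_lunit:
  assumes a: "pathin X a" shows "path_homotopic X (pcomp (\<lambda>t. a 1) a) a"
proof -
  have ph: "pathin (top_of_set {0..1}) (pcomp (\<lambda>u. 0*u+1) (\<lambda>u. 1*u+(0::real)))"
    by (intro pathin_pcomp pathin01_affine) auto
  show ?thesis
    by (rule ph_reparam_eq[OF a ph pathin01_id]) (auto simp: pcomp_def)
qed

lemma ph_runit:
  assumes a: "pathin X a" shows "path_homotopic X (pcomp a (\<lambda>t. a 0)) a"
proof -
  have ph: "pathin (top_of_set {0..1}) (pcomp (\<lambda>u. 1*u+0) (\<lambda>u. 0*u+(0::real)))"
    by (intro pathin_pcomp pathin01_affine) auto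
  show ?thesis
    by (rule ph_reparam_eq[OF a ph pathin01_id]) (auto simp: pcomp_def)
qed

lemma ph_rinv:
  assumes a: "pathin X a" shows "path_homotopic X (pcomp a (\<lambda>t. a (1-t))) (\<lambda>t. a 1)"
proof -
  have ph: "pathin (top_of_set {0..1}) (pcomp (\<lambda>u. 1*u+0) (\<lambda>u. (-1)*u+(1::real)))"
    by (intro pathin_pcomp pathin01_affine) auto
  have ps: "pathin (top_of_set {0..1}) (\<lambda>u. 0*u+(1::real))"
    by (intro pathin01_affine) auto
  show ?thesis
    by (rule ph_reparam_eq[OF a ph ps]) (auto simp: pcomp_def)
qed

lemma ph_linv:
  assumes a: "pathin X a" shows "path_homotopic X (pcomp (\<lambda>t. a (1-t)) a) (\<lambda>t. a 0)"
proof -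
  have ph: "pathin (top_of_set {0..1}) (pcomp (\<lambda>u. (-1)*u+1) (\<lambda>u. 1*u+(0::real)))"
    by (intro pathin_pcomp pathin01_affine) auto
  have ps: "pathin (top_of_set {0..1}) (\<lambda>u. 0*u+(0::real))"
    by (intro pathin01_affine) auto
  show ?thesis
    by (rule ph_reparam_eq[OF a ph ps]) (auto simp: pcomp_def)
qed

lemma pathin_rev: "pathin X a \<Longrightarrow> pathin X (\<lambda>t. a (1-t))"
proof -
  assume a: "pathin X a"
  have "pathin (top_of_set {0..1}) (\<lambda>u. (-1)*u+(1::real))" by (intro pathin01_affine) auto
  from pathin_compose[OF this a[unfolded pathin_def]] show ?thesis by (simp add: o_def)
qed

lemma rel_inessential_homotopic:
  assumes W: "rel_inessential X W"
    and a: "pathin (subtopology X W) a" and b: "pathin (subtopology X W) b"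
    and e: "a 0 = b 0" "a 1 = b 1"
  shows "path_homotopic X a b"
proof -
  have aX: "pathin X a" and bX: "pathin X b" using a b by (auto simp: pathin_subtopology)
  have rb: "pathin (subtopology X W) (\<lambda>t. b (1-t))" by (rule pathin_rev[OF b])
  have l: "pathin (subtopology X W) (pcomp (\<lambda>t. b (1-t)) a)"
    by (rule pathin_pcomp[OF rb a]) (simp add: e)
  have a0: "a 0 \<in> W" using a by (auto simp: pathin_subtopology)
  have null: "path_homotopic X (pcomp (\<lambda>t. b (1-t)) a) (\<lambda>t. a 0)"
    using W a0 l e unfolding rel_inessential_def by auto
  have rbX: "pathin X (\<lambda>t. b (1-t))" by (rule pathin_rev[OF bX])
  have s1: "path_homotopic X a (pcomp (\<lambda>t. a 1) a)" by (rule ph_sym[OF ph_lunit[OF aX]])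
  have s2: "path_homotopic X (pcomp (\<lambda>t. a 1) a) (pcomp (pcomp b (\<lambda>t. b (1-t))) a)"
    by (rule ph_pcomp[OF _ ph_refl[OF aX]]) (use ph_sym[OF ph_rinv[OF bX]] e in auto)
  have s3: "path_homotopic X (pcomp (pcomp b (\<lambda>t. b (1-t))) a) (pcomp b (pcomp (\<lambda>t. b (1-t)) a))"
    by (rule ph_sym[OF ph_assoc[OF bX rbX aX]]) (use e in auto)
  have s4: "path_homotopic X (pcomp b (pcomp (\<lambda>t. b (1-t)) a)) (pcomp b (\<lambda>t. a 0))"
    by (rule ph_pcomp[OF ph_refl[OF bX] null]) (use e in auto)
  have s5: "path_homotopic X (pcomp b (\<lambda>t. a 0)) b"
    using ph_runit[OF bX] e by simp
  show ?thesis using s1 s2 s3 s4 s5 by (meson ph_trans)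
qed

lemma topspace_CO: "topspace (CO_topology X) = paths X"
  unfolding CO_topology_def by auto

lemma pathin_pcomp_Nset:
  assumes "pathin X \<gamma>" "pathin (subtopology X U) \<delta>" "\<delta> 0 = \<gamma> 1" "pathin (subtopology X V) \<theta>" "\<theta> 1 = \<gamma> 0"
  shows "pathin X (pcomp \<delta> (pcomp \<gamma> \<theta>))"
  using assms by (intro pathin_pcomp) (auto simp: pathin_subtopology)

lemma Nset_sub: "pathin X \<gamma> \<Longrightarrow> Nset X \<gamma> U V \<subseteq> Pi1 X"
  unfolding Nset_def Pi1_def paths_def using pathin_pcomp_Nset by blast

lemma topspace_UC: "topspace (UC_topology X) = Pi1 X"
proof -
  have "\<And>x \<gamma> U V. x \<in> Nset X \<gamma> U V \<Longrightarrow> pathin X \<gamma> \<Longrightarrow> x \<in> Pi1 X" using Nset_sub by blast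
  then show ?thesis unfolding UC_topology_def topology_generated_by_topspace by blast
qed

lemma openin_COq:
  "openin (COq_topology X) S \<longleftrightarrow> S \<subseteq> Pi1 X \<and> openin (CO_topology X) {f \<in> paths X. pclass X f \<in> S}"
  unfolding COq_topology_def quotient_topology_def
  using topology_inverse'[OF istopology_quotient[of "Pi1 X" "CO_topology X" "pclass X"]]
  by (simp add: topspace_CO)

lemma pclass_mem: "pathin X f \<Longrightarrow> f \<in> pclass X f"
  by (simp add: pclass_def ph_refl)

lemma pclass_eq: "path_homotopic X f g \<Longrightarrow> pclass X f = pclass X g"
  unfolding pclass_def by (auto intro: ph_trans ph_sym)

lemma pclass_eqD: "pclass X f = pclass X g \<Longrightarrow> pathin X g \<Longrightarrow> path_homotopic X f g"
  using pclass_mem unfolding pclass_def by blast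

lemma rel_inessential_mono: "rel_inessential X V \<Longrightarrow> W \<subseteq> V \<Longrightarrow> rel_inessential X W"
  unfolding rel_inessential_def by (auto simp: pathin_subtopology)

lemma good_nbhd:
  assumes lpc: "locally_path_connected_space X" and sl: "semilocally_simply_connected X"
    and A: "openin X A" "x \<in> A"
  shows "\<exists>W. openin X W \<and> path_connectedin X W \<and> rel_inessential X W \<and> x \<in> W \<and> W \<subseteq> A"
proof -
  have "x \<in> topspace X" using A openin_subset by blast
  with sl have "\<exists>U V. openin X U \<and> x \<in> U \<and> U \<subseteq> V \<and> V \<subseteq> topspace X \<and> rel_inessential X V"
    unfolding semilocally_simply_connected_def by (rule bspec)
  then obtain U0 V0 where U0: "openin X U0" "x \<in> U0" "U0 \<subseteq> V0" "rel_inessential X V0"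
    by blast
  then obtain W where W: "openin X W" "path_connectedin X W" "x \<in> W" "W \<subseteq> U0 \<inter> A"
    using lpc A unfolding locally_path_connected_space by (meson IntI openin_Int)
  have "W \<subseteq> V0" using W(4) U0(3) by blast
  then have "rel_inessential X W" by (rule rel_inessential_mono[OF U0(4)])
  moreover have "W \<subseteq> A" using W(4) by blast
  ultimately show ?thesis using W by (intro exI[of _ W]) simp
qed

lemma path_preimage_open:
  assumes "pathin X f" "openin X W"
  shows "\<exists>T. open T \<and> {s \<in> {0..1}. f s \<in> W} = {0..1} \<inter> T"
proof -
  have "openin (top_of_set {0..1}) {s \<in> topspace (top_of_set {0..1}). f s \<in> W}"
    using assms unfolding pathin_def by (rule openin_continuous_map_preimage)
  then show ?thesis by (simp add: openin_open)
qed

lemma tube: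
  assumes f: "pathin X f" and W: "openin X W" and K: "compact K" "K \<subseteq> {0..1}" and fK: "f ` K \<subseteq> W"
  shows "\<exists>e>0. \<forall>k\<in>K. \<forall>s\<in>{0..1}. \<bar>s - k\<bar> \<le> e \<longrightarrow> f s \<in> W"
proof -
  obtain T where T: "open T" "{s \<in> {0..1}. f s \<in> W} = {0..1} \<inter> T"
    using path_preimage_open[OF f W] by blast
  have "K \<subseteq> T" using K fK T(2) by blast
  then obtain e where e: "e > 0" "(\<Union>x\<in>K. cball x e) \<subseteq> T"
    using compact_subset_open_imp_cball_epsilon_subset[OF K(1) T(1)] by blast
  have "f s \<in> W" if "k \<in> K" "s \<in> {0..1}" "\<bar>s - k\<bar> \<le> e" for k s
  proof -
    have "s \<in> cball k e" using that by (simp add: dist_real_def abs_minus_commute)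
    then have "s \<in> T" using e that by blast
    then show ?thesis using T(2) that by blast
  qed
  then show ?thesis using e by blast
qed

definition close :: "(real \<Rightarrow> 'a) \<Rightarrow> real \<Rightarrow> 'a set \<Rightarrow> 'a set \<Rightarrow> (real \<Rightarrow> 'a) \<Rightarrow> bool" where
  "close f e U V g \<longleftrightarrow> (\<forall>t\<in>{0..1}. (\<exists>s\<in>{0..1}. \<bar>s - t\<bar> \<le> e \<and> g t = f s) \<or> (t \<le> e \<and> g t \<in> V) \<or> (1 - e \<le> t \<and> g t \<in> U))"

definition Good :: "'a topology \<Rightarrow> (real \<Rightarrow> 'a) set \<Rightarrow> bool" where
  "Good X Q \<longleftrightarrow> (\<forall>f\<in>Q. \<exists>e>0. \<exists>U V. openin X U \<and> f 1 \<in> U \<and> openin X V \<and> f 0 \<in> V \<and>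
      (\<forall>g\<in>paths X. close f e U V g \<longrightarrow> g \<in> Q))"

lemma close_mono: "close f e U V g \<Longrightarrow> e \<le> e' \<Longrightarrow> U \<subseteq> U' \<Longrightarrow> V \<subseteq> V' \<Longrightarrow> close f e' U' V' g"
  unfolding close_def by (smt (verit, ccfv_SIG) subsetD)

lemma Good_generated:
  assumes "generate_topology_on (insert (paths X)
       {{f \<in> paths X. f ` K \<subseteq> U} | K U. compact K \<and> K \<subseteq> {0..1} \<and> openin X U}) Q"
  shows "Good X Q"
  using assms
proof induction
  case Empty
  then show ?case by (simp add: Good_def)
next
  case (Int a b)
  show ?case unfolding Good_def
  proof
    fix f assume "f \<in> a \<inter> b"
    then obtain e1 U1 V1 e2 U2 V2 where
      1: "e1 > 0" "openin X U1" "f 1 \<in> U1" "openin X V1" "f 0 \<in> V1" "\<forall>g\<in>paths X. close f e1 U1 V1 g \<longrightarrow> g \<in> a" and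
      2: "e2 > 0" "openin X U2" "f 1 \<in> U2" "openin X V2" "f 0 \<in> V2" "\<forall>g\<in>paths X. close f e2 U2 V2 g \<longrightarrow> g \<in> b"
      using Int.IH unfolding Good_def by (metis IntD1 IntD2)
    show "\<exists>e>0. \<exists>U V. openin X U \<and> f 1 \<in> U \<and> openin X V \<and> f 0 \<in> V \<and> (\<forall>g\<in>paths X. close f e U V g \<longrightarrow> g \<in> a \<inter> b)"
    proof (intro exI conjI ballI impI)
      show "min e1 e2 > 0" using 1 2 by simp
      show "openin X (U1 \<inter> U2)" "openin X (V1 \<inter> V2)" using 1 2 by auto
      show "f 1 \<in> U1 \<inter> U2" "f 0 \<in> V1 \<inter> V2" using 1 2 by auto
      fix g assume "g \<in> paths X" "close f (min e1 e2) (U1 \<inter> U2) (V1 \<inter> V2) g"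
      then have "close f e1 U1 V1 g" "close f e2 U2 V2 g"
        using close_mono[of f "min e1 e2" "U1 \<inter> U2" "V1 \<inter> V2" g] by auto
      then show "g \<in> a \<inter> b" using 1(6) 2(6) \<open>g \<in> paths X\<close> by blast
    qed
  qed
next
  case (UN K)
  then show ?case unfolding Good_def by (meson UnionE UnionI)
next
  case (Basis s)
  then consider "s = paths X" | K W where "s = {f \<in> paths X. f ` K \<subseteq> W}" "compact K" "K \<subseteq> {0..1}" "openin X W"
    by blast
  then show ?case
  proof cases
    case 1
    show ?thesis unfolding Good_def
    proof
      fix f assume "f \<in> s"
      then have "f 0 \<in> topspace X" "f 1 \<in> topspace X" using 1
        by (auto simp: paths_def path_start_in_topspace path_finish_in_topspace)
      then show "\<exists>e>0. \<exists>U V. openin X U \<and> f 1 \<in> U \<and> openin X V \<and> f 0 \<in> V \<and> (\<forall>g\<in>paths X. close f e U V g \<longrightarrow> g \<in> s)"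
        using 1 by (intro exI[of _ 1]) auto
    qed
  next
    case 2
    show ?thesis unfolding Good_def
    proof
      fix f assume fs: "f \<in> s"
      then have f: "pathin X f" "f ` K \<subseteq> W" using 2 by (auto simp: paths_def)
      obtain e where e: "e > 0" "\<forall>k\<in>K. \<forall>s\<in>{0..1}. \<bar>s - k\<bar> \<le> e \<longrightarrow> f s \<in> W"
        using tube[OF f(1) 2(4) 2(2) 2(3) f(2)] by blast
      define U where "U = (if f 1 \<in> W then W else topspace X)"
      define V where "V = (if f 0 \<in> W then W else topspace X)"
      show "\<exists>e>0. \<exists>U V. openin X U \<and> f 1 \<in> U \<and> openin X V \<and> f 0 \<in> V \<and> (\<forall>g\<in>paths X. close f e U V g \<longrightarrow> g \<in> s)"
      proof (intro exI conjI ballI impI)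
        show "e > 0" by (rule e)
        show "openin X U" "openin X V" using 2(4) by (auto simp: U_def V_def)
        show "f 1 \<in> U" "f 0 \<in> V" using f(1) by (auto simp: U_def V_def path_start_in_topspace path_finish_in_topspace)
        fix g assume g: "g \<in> paths X" "close f e U V g"
        have "g k \<in> W" if k: "k \<in> K" for k
        proof -
          have k01: "k \<in> {0..1}" using k 2(3) by blast
          from g(2) k01 consider s where "s \<in> {0..1}" "\<bar>s - k\<bar> \<le> e" "g k = f s"
            | "k \<le> e" "g k \<in> V" | "1 - e \<le> k" "g k \<in> U"
            unfolding close_def by blast
          then show ?thesis
          proof cases
            case 1 then show ?thesis using e k by auto
          next
            case 2
            then have "f 0 \<in> W" using e(2) k k01 by (metis abs_of_nonneg atLeastAtMost_iff diff_0 abs_minus_cancel order_refl zero_le_one)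
            then show ?thesis using 2 by (simp add: V_def)
          next
            case 3
            then have "f 1 \<in> W" using e(2) k k01 by (smt (verit) atLeastAtMost_iff)
            then show ?thesis using 3 by (simp add: U_def)
          qed
        qed
        then show "g \<in> s" using g(1) 2(1) by auto
      qed
    qed
  qed
qed

lemma phi3_path:
  fixes e :: real
  assumes e: "0 < e" "e \<le> 1/4"
  defines "\<phi> \<equiv> (\<lambda>t. if t \<le> e then t/(4*e) else if t \<le> 1-e then 1/4 + (t-e)/(4*(1-2*e)) else 1/2 + (t-(1-e))/(2*e))"
  shows "pathin (top_of_set {0..1}) \<phi>"
proof -
  have d: "1 - 2*e \<ge> 1/2" using e by simp
  have dp: "0 < 1 - 2*e" using e by simp
  have d4: "0 < 4*(1-2*e)" using dp by simp
  have e4: "0 < 4*e" "0 < 2*e" using e by simp_all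
  have c: "continuous_on {0..1} \<phi>"
    unfolding \<phi>_def
  proof (rule continuous_on_cases_le[where h="\<lambda>t. t"])
    show "continuous_on {x \<in> {0..1}. x \<le> e} (\<lambda>t. t / (4 * e))" using e by (intro continuous_intros) auto
    show "continuous_on {x \<in> {0..1}. e \<le> x} (\<lambda>t. if t \<le> 1 - e then 1/4 + (t-e)/(4*(1-2*e)) else 1/2 + (t-(1-e))/(2*e))"
    proof (rule continuous_on_cases_le[where h="\<lambda>t. t"])
      show "continuous_on {x \<in> {x \<in> {0..1}. e \<le> x}. x \<le> 1 - e} (\<lambda>t. 1/4 + (t-e)/(4*(1-2*e)))"
        using d by (intro continuous_intros) auto
      show "continuous_on {x \<in> {x \<in> {0..1}. e \<le> x}. 1 - e \<le> x} (\<lambda>t. 1/2 + (t-(1-e))/(2*e))"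
        using e by (intro continuous_intros) auto
      show "continuous_on {x \<in> {0..1}. e \<le> x} (\<lambda>t. t)" by (intro continuous_intros)
    next
      fix x :: real assume "x \<in> {x \<in> {0..1}. e \<le> x}" "x = 1 - e"
      then have x: "x = 1 - e" by simp
      have 1: "(x-e)/(4*(1-2*e)) = 1/4" unfolding x using dp by simp
      have 2: "(x-(1-e))/(2*e) = 0" unfolding x by simp
      show "1/4 + (x-e)/(4*(1-2*e)) = 1/2 + (x-(1-e))/(2*e)"
        unfolding 1 2 by simp
    qed
    show "continuous_on {0..1} (\<lambda>t. t)" by (intro continuous_intros)
  next
    fix x :: real assume "x \<in> {0..1}" "x = e"
    then have x: "x = e" "x \<le> 1 - e" using e by auto
    have 1: "x/(4*e) = 1/4" unfolding x(1) using e by simp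
    have 2: "(x-e)/(4*(1-2*e)) = 0" unfolding x(1) by simp
    show "x / (4 * e) = (if x \<le> 1 - e then 1/4 + (x-e)/(4*(1-2*e)) else 1/2 + (x-(1-e))/(2*e))"
      using x(2) unfolding 1 2 by simp
  qed
  have r: "\<phi> t \<in> {0..1}" if t: "t \<in> {0..1}" for t
  proof (cases "t \<le> e")
    case True
    then have a: "t/(4*e) \<le> 1/4" unfolding pos_divide_le_eq[OF e4(1)] by simp
    have b: "0 \<le> t/(4*e)" using t e by simp
    have "\<phi> t = t/(4*e)" using True by (simp add: \<phi>_def)
    then show ?thesis unfolding atLeastAtMost_iff using a b by linarith
  next
    case False
    show ?thesis
    proof (cases "t \<le> 1-e")
      case True
      have a: "(t-e)/(4*(1-2*e)) \<le> 1/4" unfolding pos_divide_le_eq[OF d4] using True by (simp add: algebra_simps)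
      have b: "0 \<le> (t-e)/(4*(1-2*e))" using False dp by simp
      have "\<phi> t = 1/4 + (t-e)/(4*(1-2*e))" using True False by (simp add: \<phi>_def)
      then show ?thesis unfolding atLeastAtMost_iff using a b by linarith
    next
      case F2: False
      have a: "(t-(1-e))/(2*e) \<le> 1/2" unfolding pos_divide_le_eq[OF e4(2)] using t by (simp add: algebra_simps)
      have b: "0 \<le> (t-(1-e))/(2*e)" using F2 e by simp
      have "\<phi> t = 1/2 + (t-(1-e))/(2*e)" using F2 False by (simp add: \<phi>_def)
      then show ?thesis unfolding atLeastAtMost_iff using a b by linarith
    qed
  qed
  show ?thesis
    using c r unfolding pathin_canon_iff path_def by auto
qed

lemma arith_mid:
  fixes t e e' :: real
  assumes e': "0 < e'" "e' \<le> 1/4" "e' \<le> e/4" and t: "t \<in> {0..1}" and 2: "e' < t" "t \<le> 1-e'"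
  shows "(t-e')/(1-2*e') \<in> {0..1} \<and> \<bar>(t-e')/(1-2*e') - t\<bar> \<le> e"
proof -
  define s where "s = (t-e')/(1-2*e')"
  define c where "c = 1 - 2*e'"
  have dpos: "0 < c" using e' by (simp add: c_def)
  have d: "1/2 \<le> c" using e' by (simp add: c_def)
  have s0: "0 \<le> s" unfolding s_def using 2 dpos by (simp add: c_def)
  have "t - e' \<le> 1 * c" using 2 by (simp add: c_def)
  then have s1: "s \<le> 1" unfolding s_def c_def[symmetric] pos_divide_le_eq[OF dpos] .
  have "s * c = t - e'" unfolding s_def c_def[symmetric] using dpos by simp
  then have "(s - t) * c = e'*(2*t-1)" by (simp add: c_def algebra_simps)
  then have st: "s - t = e'*(2*t-1) / c" using dpos by (simp add: eq_divide_eq)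
  have "\<bar>e'*(2*t-1)\<bar> \<le> e'" using t e' by (simp add: abs_mult abs_le_iff)
  moreover have "e*(1/2) \<le> e*c" using d e' by (intro mult_left_mono) auto
  ultimately have "\<bar>e'*(2*t-1)\<bar> \<le> e * c" using e' by linarith
  then have "\<bar>e'*(2*t-1)\<bar> / c \<le> e" using dpos by (simp add: pos_divide_le_eq)
  then have "\<bar>s - t\<bar> \<le> e" unfolding st using dpos by (simp add: abs_divide)
  then show ?thesis using s0 s1 by (simp add: s_def)
qed

lemma ar2: fixes e' t :: real assumes e': "0 < e'" "e' \<le> 1/4" and d: "1 - 2*e' \<ge> 1/2" and 2: "e' < t" "t \<le> 1-e'"
  and p: "\<phi> = 1/4 + (t-e')/(4*(1-2*e'))"
  shows "0 < (t-e')/(4*(1-2*e'))" "(t-e')/(4*(1-2*e')) \<le> 1/4" "4*\<phi>-1 = (t-e')/(1-2*e')"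
proof -
  define c where "c = 1 - 2*e'"
  have dp: "0 < c" using d by (simp add: c_def)
  have dp4: "0 < 4*c" using dp by simp
  show "0 < (t-e')/(4*(1-2*e'))" unfolding c_def[symmetric] using 2 dp4 by simp
  have "t - e' \<le> 1/4 * (4*c)" using 2 by (simp add: c_def)
  then show "(t-e')/(4*(1-2*e')) \<le> 1/4" unfolding c_def[symmetric] pos_divide_le_eq[OF dp4] .
  have "4*((t-e')/(4*c)) = (t-e')/c" using dp by (simp add: field_simps)
  then show "4*\<phi>-1 = (t-e')/(1-2*e')" unfolding p c_def[symmetric] by simp
qed

lemma ar3: fixes e' t :: real assumes e': "0 < e'" "e' \<le> 1/4" and t: "t \<le> 1" and 3: "1 - e' < t"
  shows "0 < (t-(1-e'))/(2*e')" "(t-(1-e'))/(2*e') \<le> 1/2"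
proof -
  have dp4: "0 < 2*e'" using e' by simp
  show "0 < (t-(1-e'))/(2*e')" using 3 dp4 by simp
  have "t-(1-e') \<le> 1/2 * (2*e')" using t by simp
  then show "(t-(1-e'))/(2*e') \<le> 1/2" unfolding pos_divide_le_eq[OF dp4] .
qed

lemma ar1: fixes e' t :: real assumes e': "0 < e'" "e' \<le> 1/4" and t: "0 \<le> t" and 1: "t \<le> e'"
  shows "t/(4*e') \<le> 1/4" "4*(t/(4*e')) \<in> {0..1}"
proof -
  have dp4: "0 < 4*e'" using e' by simp
  have "t \<le> 1/4 * (4*e')" using 1 by simp
  then show a: "t/(4*e') \<le> 1/4" unfolding pos_divide_le_eq[OF dp4] .
  have b: "0 \<le> t/(4*e')" using t dp4 by simp
  show "4*(t/(4*e')) \<in> {0..1}" using a b by simp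
qed


lemma dir2_key:
  assumes f: "pathin X f" and e: "e > 0"
    and U': "U' \<subseteq> U" and V': "V' \<subseteq> V"
    and \<delta>: "pathin (subtopology X U') \<delta>" "\<delta> 0 = f 1"
    and \<theta>: "pathin (subtopology X V') \<theta>" "\<theta> 1 = f 0"
  shows "\<exists>g. pathin X g \<and> close f e U V g \<and> path_homotopic X (pcomp \<delta> (pcomp f \<theta>)) g"
proof -
  define h where "h = pcomp \<delta> (pcomp f \<theta>)"
  have hp: "pathin X h" unfolding h_def using pathin_pcomp_Nset[OF f \<delta> \<theta>] .
  define e' where "e' = min e 1 / 4"
  have e': "0 < e'" "e' \<le> 1/4" "e' \<le> e/4" using e by (auto simp: e'_def)
  define \<phi> where "\<phi> \<equiv> (\<lambda>t. if t \<le> e' then t/(4*e') else if t \<le> 1-e' then 1/4 + (t-e')/(4*(1-2*e')) else 1/2 + (t-(1-e'))/(2*e'))"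
  have php: "pathin (top_of_set {0..1}) \<phi>" unfolding \<phi>_def by (rule phi3_path[OF e'(1,2)])
  have phi01: "\<phi> t \<in> {0..1}" if "t \<in> {0..1}" for t
    using php that by (auto simp: pathin_canon_iff)
  have hom: "path_homotopic X h (h \<circ> \<phi>)"
  proof (rule ph_reparam_eq[OF hp pathin01_id php])
    show "1*0+0 = \<phi> 0" unfolding \<phi>_def using e' by simp
    have q: "e'/(2*e') = 1/2" using e' by simp
    have "\<not> 1 \<le> e'" "\<not> 1 \<le> 1 - e'" using e' by auto
    then show "1*1+0 = \<phi> 1" unfolding \<phi>_def using q by simp
  next
    fix t :: real show "h t = h (1*t+0)" by simp
  next
    fix t :: real show "(h \<circ> \<phi>) t = h (\<phi> t)" by simp
  qed
  have gp: "pathin X (h \<circ> \<phi>)" using ph_imp[OF hom] by blast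
  have h1: "h x = \<theta> (4*x)" if "x \<le> 1/4" for x using that by (simp add: h_def pcomp_def)
  have h2: "h x = f (4*x-1)" if "1/4 < x" "x \<le> 1/2" for x using that by (simp add: h_def pcomp_def)
  have h3: "h x = \<delta> (2*x-1)" if "1/2 < x" for x using that by (simp add: h_def pcomp_def)
  have \<theta>V: "\<theta> y \<in> V" if "y \<in> {0..1}" for y using \<theta>(1) that V' by (auto simp: pathin_subtopology)
  have \<delta>U: "\<delta> y \<in> U" if "y \<in> {0..1}" for y using \<delta>(1) that U' by (auto simp: pathin_subtopology)
  have d: "1 - 2*e' \<ge> 1/2" using e' by simp
  have cl: "close f e U V (h \<circ> \<phi>)"
    unfolding close_def
  proof
    fix t :: real assume t: "t \<in> {0..1}"
    consider "t \<le> e'" | "e' < t" "t \<le> 1-e'" | "1 - e' < t" by linarith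
    then show "(\<exists>s\<in>{0..1}. \<bar>s - t\<bar> \<le> e \<and> (h \<circ> \<phi>) t = f s) \<or> (t \<le> e \<and> (h \<circ> \<phi>) t \<in> V) \<or> (1 - e \<le> t \<and> (h \<circ> \<phi>) t \<in> U)"
    proof cases
      case 1
      have p: "\<phi> t = t/(4*e')" using 1 by (simp add: \<phi>_def)
      have q1: "t/(4*e') \<le> 1/4" "4*(t/(4*e')) \<in> {0..1}" using ar1[OF e'(1,2) _ 1] t by auto
      have "(h \<circ> \<phi>) t = \<theta> (4*(t/(4*e')))" using h1[OF q1(1)] p by simp
      moreover note q1(2)
      ultimately have "(h \<circ> \<phi>) t \<in> V" using \<theta>V by simp
      moreover have "t \<le> e" using 1 e' e by linarith
      ultimately show ?thesis by blast
    next
      case 2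
      define s where "s = (t-e')/(1-2*e')"
      have p: "\<phi> t = 1/4 + (t-e')/(4*(1-2*e'))" using 2 by (simp add: \<phi>_def)
      have a: "0 < (t-e')/(4*(1-2*e'))" "(t-e')/(4*(1-2*e')) \<le> 1/4" "4*\<phi> t-1 = (t-e')/(1-2*e')"
        using ar2[OF e'(1,2) d 2 p] by auto
      have "h (\<phi> t) = f (4*\<phi> t - 1)" by (rule h2) (use p a in linarith)+
      then have "(h \<circ> \<phi>) t = f (4*\<phi> t-1)" by simp
      moreover have "4*\<phi> t-1 = s" using a(3) by (simp add: s_def)
      ultimately have gs: "(h \<circ> \<phi>) t = f s" by simp
      have s01: "s \<in> {0..1}" and st: "\<bar>s - t\<bar> \<le> e"
        using arith_mid[OF e' t 2] by (auto simp: s_def)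
      show ?thesis using gs s01 st by blast
    next
      case 3
      have p: "\<phi> t = 1/2 + (t-(1-e'))/(2*e')" using 3 e' by (simp add: \<phi>_def)
      have a1: "0 < (t-(1-e'))/(2*e')" and a2: "(t-(1-e'))/(2*e') \<le> 1/2"
        using ar3[OF e'(1,2) _ 3] t by auto
      have "h (\<phi> t) = \<delta> (2*\<phi> t-1)" by (rule h3) (use p a1 in linarith)
      then have "(h \<circ> \<phi>) t = \<delta> (2*(1/2 + (t-(1-e'))/(2*e'))-1)" using p by simp
      moreover have "2*(1/2 + (t-(1-e'))/(2*e'))-1 \<in> {0..1}"
      proof -
        have "\<forall>X::real. 0 < X \<longrightarrow> X \<le> 1/2 \<longrightarrow> 2*(1/2+X)-1 \<in> {0..1}" by auto
        then show ?thesis using a1 a2 by blast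
      qed
      ultimately have "(h \<circ> \<phi>) t \<in> U" using \<delta>U by simp
      moreover have "1 - e \<le> t" using 3 e' e by linarith
      ultimately show ?thesis by blast
    qed
  qed
  show ?thesis using gp cl hom unfolding h_def by blast
qed

lemma Nset_open_UC:
  assumes "pathin X \<gamma>" "openin X U" "\<gamma> 1 \<in> U" "path_connectedin X U" "rel_inessential X U"
    "openin X V" "\<gamma> 0 \<in> V" "path_connectedin X V" "rel_inessential X V"
  shows "openin (UC_topology X) (Nset X \<gamma> U V)"
  unfolding UC_topology_def by (rule topology_generated_by_Basis) (use assms in blast)

lemma pclass_triv:
  assumes f: "pathin X f"
  shows "pclass X f = pclass X (pcomp (\<lambda>t. f 1) (pcomp f (\<lambda>t. f 0)))"
proof -
  have c1: "pathin X (\<lambda>t. f 1)" using f by (simp add: path_finish_in_topspace)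
  have "path_homotopic X (pcomp (\<lambda>t. f 1) (pcomp f (\<lambda>t. f 0))) (pcomp (\<lambda>t. f 1) f)"
    by (rule ph_pcomp[OF ph_refl[OF c1] ph_runit[OF f]]) simp
  then have "path_homotopic X (pcomp (\<lambda>t. f 1) (pcomp f (\<lambda>t. f 0))) f"
    using ph_lunit[OF f] ph_trans by blast
  then show ?thesis by (metis pclass_eq ph_sym)
qed

lemma dir2:
  assumes lpc: "locally_path_connected_space X" and sl: "semilocally_simply_connected X"
    and S: "openin (COq_topology X) S"
  shows "openin (UC_topology X) S"
proof -
  define P where "P = {f \<in> paths X. pclass X f \<in> S}"
  have SP: "S \<subseteq> Pi1 X" and Po: "openin (CO_topology X) P" using S unfolding openin_COq P_def by auto
  have G: "Good X P"
    by (rule Good_generated) (use Po in \<open>simp add: CO_topology_def openin_topology_generated_by_iff\<close>)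
  show ?thesis
  proof (subst openin_subopen, intro ballI)
    fix c assume cS: "c \<in> S"
    then obtain f where f: "pathin X f" "c = pclass X f" using SP unfolding Pi1_def paths_def by auto
    then have fP: "f \<in> P" using cS by (simp add: P_def paths_def)
    then obtain e U V where e: "e > 0" "openin X U" "f 1 \<in> U" "openin X V" "f 0 \<in> V"
      and cl: "\<forall>g\<in>paths X. close f e U V g \<longrightarrow> g \<in> P"
      using G unfolding Good_def by blast
    obtain U' where U': "openin X U'" "path_connectedin X U'" "rel_inessential X U'" "f 1 \<in> U'" "U' \<subseteq> U"
      using good_nbhd[OF lpc sl e(2,3)] by blast
    obtain V' where V': "openin X V'" "path_connectedin X V'" "rel_inessential X V'" "f 0 \<in> V'" "V' \<subseteq> V"
      using good_nbhd[OF lpc sl e(4,5)] by blast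
    show "\<exists>T. openin (UC_topology X) T \<and> c \<in> T \<and> T \<subseteq> S"
    proof (intro exI conjI)
      show "openin (UC_topology X) (Nset X f U' V')"
        by (rule Nset_open_UC) (use f U' V' in auto)
      have c1: "pathin (subtopology X U') (\<lambda>t. f 1)" and c0: "pathin (subtopology X V') (\<lambda>t. f 0)"
        using U' V' openin_subset[OF U'(1)] openin_subset[OF V'(1)] by auto
      show "c \<in> Nset X f U' V'"
        unfolding Nset_def f(2)
        apply (rule CollectI)
        apply (rule exI[of _ "\<lambda>t. f 1"], rule exI[of _ "\<lambda>t. f 0"])
        using pclass_triv[OF f(1)] c1 c0 by auto
      show "Nset X f U' V' \<subseteq> S"
      proof
        fix d assume "d \<in> Nset X f U' V'"
        then obtain \<delta> \<theta> where d: "d = pclass X (pcomp \<delta> (pcomp f \<theta>))"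
          and \<delta>: "pathin (subtopology X U') \<delta>" "\<delta> 0 = f 1"
          and \<theta>: "pathin (subtopology X V') \<theta>" "\<theta> 1 = f 0"
          unfolding Nset_def by blast
        obtain g where g: "pathin X g" "close f e U V g" "path_homotopic X (pcomp \<delta> (pcomp f \<theta>)) g"
          using dir2_key[OF f(1) e(1) U'(5) V'(5) \<delta> \<theta>] by blast
        have "g \<in> paths X" using g(1) by (simp add: paths_def)
        then have "g \<in> P" using cl g(2) by blast
        then have "pclass X g \<in> S" unfolding P_def by blast
        then show "d \<in> S" using d pclass_eq[OF g(3)] by simp
      qed
    qed
  qed
qed

definition pre :: "(real \<Rightarrow> 'a) \<Rightarrow> nat \<Rightarrow> nat \<Rightarrow> real \<Rightarrow> 'a" where
  "pre h m n = (\<lambda>t. h ((real m / real n) * t + 0))"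
definition seg :: "(real \<Rightarrow> 'a) \<Rightarrow> nat \<Rightarrow> nat \<Rightarrow> real \<Rightarrow> 'a" where
  "seg h m n = (\<lambda>t. h ((1 / real n) * t + real m / real n))"

lemma sucdiv: "1 / real n + real m / real n = real (Suc m) / real n"
  by (simp add: add_divide_distrib[symmetric] add.commute)

lemma pre_0 [simp]: "pre h m n 0 = h 0" and pre_1 [simp]: "pre h m n 1 = h (real m / real n)"
  by (simp_all add: pre_def)
lemma seg_0 [simp]: "seg h m n 0 = h (real m / real n)" and seg_1 [simp]: "seg h m n 1 = h (real (Suc m) / real n)"
  by (simp_all add: seg_def sucdiv)

lemma divle1: "m \<le> n \<Longrightarrow> real m / real n \<le> 1"
  by (cases "n = 0") (auto simp: divide_le_eq_1)

lemma pathin_pre: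
  assumes h: "pathin X h" and m: "m \<le> n"
  shows "pathin X (pre h m n)"
proof -
  have "pathin (top_of_set {0..1}) (\<lambda>u. (real m / real n) * u + 0)"
    by (rule pathin01_affine) (use divle1[OF m] in auto)
  from pathin_compose[OF this h[unfolded pathin_def]] show ?thesis by (simp add: pre_def o_def)
qed

lemma pathin_seg:
  assumes h: "pathin X h" and m: "Suc m \<le> n"
  shows "pathin X (seg h m n)"
proof -
  have "pathin (top_of_set {0..1}) (\<lambda>u. (1 / real n) * u + real m / real n)"
    by (rule pathin01_affine) (use divle1[OF m] divle1[of m n] m in \<open>auto simp: sucdiv\<close>)
  from pathin_compose[OF this h[unfolded pathin_def]] show ?thesis by (simp add: seg_def o_def)
qed

lemma pre_range:
  assumes "t \<in> {0..1}" "0 < n"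
  shows "(real m / real n) * t + 0 \<in> {0..real m / real n}"
proof -
  have "(real m / real n) * t \<le> (real m / real n) * 1" using assms by (intro mult_left_mono) auto
  moreover have "0 \<le> (real m / real n) * t" using assms by simp
  ultimately show ?thesis by simp
qed

lemma seg_range:
  assumes "t \<in> {0..1}" "0 < n"
  shows "(1 / real n) * t + real m / real n \<in> {real m / real n..real (Suc m) / real n}"
proof -
  have "(1 / real n) * t \<le> (1 / real n) * 1" using assms by (intro mult_left_mono) auto
  moreover have "0 \<le> (1 / real n) * t" using assms by simp
  ultimately have "0 \<le> (1 / real n) * t" "(1 / real n) * t \<le> 1 / real n" by simp_all
  then show ?thesis using sucdiv[of n m] by auto
qed

lemma pre_split:
  assumes h: "pathin X h" and m: "Suc m \<le> n"
  shows "path_homotopic X (pcomp (seg h m n) (pre h m n)) (pre h (Suc m) n)"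
proof -
  have p1: "pathin (top_of_set {0..1}) (\<lambda>u. (1 / real n) * u + real m / real n)"
    by (rule pathin01_affine) (use divle1[OF m] divle1[of m n] m in \<open>auto simp: sucdiv\<close>)
  have p2: "pathin (top_of_set {0..1}) (\<lambda>u. (real m / real n) * u + 0)"
    by (rule pathin01_affine) (use divle1[of m n] m in auto)
  have ph: "pathin (top_of_set {0..1}) (pcomp (\<lambda>u. (1 / real n) * u + real m / real n) (\<lambda>u. (real m / real n) * u + 0))"
    by (rule pathin_pcomp[OF p1 p2]) simp
  have ps: "pathin (top_of_set {0..1}) (\<lambda>u. (real (Suc m) / real n) * u + 0)"
    by (rule pathin01_affine) (use divle1[OF m] in auto)
  show ?thesis
    by (rule ph_reparam_eq[OF h ph ps]) (auto simp: pcomp_def seg_def pre_def sucdiv)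
qed

lemma pathin_sub_mono: "pathin (subtopology X A) p \<Longrightarrow> A \<subseteq> B \<Longrightarrow> pathin (subtopology X B) p"
  by (auto simp: pathin_subtopology)

lemma path_in_pc:
  assumes "path_connectedin X C" "x \<in> C" "y \<in> C"
  obtains a where "pathin (subtopology X C) a" "a 0 = x" "a 1 = y"
proof -
  obtain a where "pathin X a" "a \<in> {0..1} \<rightarrow> C" "a 0 = x" "a 1 = y"
    using assms unfolding path_connectedin by blast
  then show ?thesis using that by (auto simp: pathin_subtopology)
qed

lemma chain:
  fixes n :: nat and W C :: "nat \<Rightarrow> 'a set"
  assumes n: "0 < n"
    and f: "pathin X f" and g: "pathin X g"
    and W: "\<And>k. k < n \<Longrightarrow> rel_inessential X (W k)"
    and fW: "\<And>k s. k < n \<Longrightarrow> s \<in> {real k / real n..real (Suc k) / real n} \<Longrightarrow> f s \<in> W k"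
    and gW: "\<And>k s. k < n \<Longrightarrow> s \<in> {real k / real n..real (Suc k) / real n} \<Longrightarrow> g s \<in> W k"
    and C: "\<And>k. k \<le> n \<Longrightarrow> path_connectedin X (C k)"
    and fC: "\<And>k. k \<le> n \<Longrightarrow> f (real k / real n) \<in> C k"
    and gC: "\<And>k. k \<le> n \<Longrightarrow> g (real k / real n) \<in> C k"
    and CW1: "\<And>k. 1 \<le> k \<Longrightarrow> k \<le> n \<Longrightarrow> C k \<subseteq> W (k - 1)"
    and CW2: "\<And>k. k < n \<Longrightarrow> C k \<subseteq> W k"
  shows "\<exists>\<alpha> \<beta>. pathin (subtopology X (C n)) \<alpha> \<and> \<alpha> 0 = f 1 \<and> \<alpha> 1 = g 1 \<and>
           pathin (subtopology X (C 0)) \<beta> \<and> \<beta> 0 = g 0 \<and> \<beta> 1 = f 0 \<and>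
           path_homotopic X g (pcomp \<alpha> (pcomp f \<beta>))"
proof -
  obtain \<beta> where \<beta>: "pathin (subtopology X (C 0)) \<beta>" "\<beta> 0 = g 0" "\<beta> 1 = f 0"
    using path_in_pc[OF C[of 0] gC[of 0] fC[of 0]] by auto
  have \<beta>X: "pathin X \<beta>" using \<beta>(1) by (simp add: pathin_subtopology)
  have \<beta>W: "pathin (subtopology X (W 0)) \<beta>" using pathin_sub_mono[OF \<beta>(1) CW2[OF n]] .
  have segW: "pathin (subtopology X (W m)) (seg h m n)"
    if h: "pathin X h" and hW: "\<And>s. s \<in> {real m / real n..real (Suc m) / real n} \<Longrightarrow> h s \<in> W m"
      and m: "Suc m \<le> n" for h m
    unfolding pathin_subtopology
    using pathin_seg[OF h m] hW seg_range[OF _ n, of _ m] by (auto simp: seg_def)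
  have pre1W: "pathin (subtopology X (W 0)) (pre h 1 n)"
    if h: "pathin X h" and hW: "\<And>s. s \<in> {real 0 / real n..real (Suc 0) / real n} \<Longrightarrow> h s \<in> W 0" for h
  proof -
    have "pathin X (pre h 1 n)" using pathin_pre[OF h] n by simp
    moreover have "pre h 1 n t \<in> W 0" if "t \<in> {0..1}" for t
      using hW pre_range[OF that n, of 1] by (simp add: pre_def)
    ultimately show ?thesis by (simp add: pathin_subtopology)
  qed
  have IND: "\<exists>\<alpha>. pathin (subtopology X (C m)) \<alpha> \<and> \<alpha> 0 = f (real m / real n) \<and> \<alpha> 1 = g (real m / real n) \<and>
           path_homotopic X (pre g m n) (pcomp \<alpha> (pcomp (pre f m n) \<beta>))"
    if "1 \<le> m" "m \<le> n" for m
    using that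
  proof (induction m)
    case 0 then show ?case by simp
  next
    case (Suc m)
    show ?case
    proof (cases "m = 0")
      case True
      obtain \<alpha> where \<alpha>: "pathin (subtopology X (C 1)) \<alpha>" "\<alpha> 0 = f (real 1 / real n)" "\<alpha> 1 = g (real 1 / real n)"
        using path_in_pc[OF C fC gC, of 1] Suc.prems by auto
      have \<alpha>W: "pathin (subtopology X (W 0)) \<alpha>"
        using pathin_sub_mono[OF \<alpha>(1) CW1[of 1]] Suc.prems True by simp
      have fW0: "pathin (subtopology X (W 0)) (pre f 1 n)" by (rule pre1W[OF f fW[OF n]])
      have gW0: "pathin (subtopology X (W 0)) (pre g 1 n)" by (rule pre1W[OF g gW[OF n]])
      have p1: "pathin (subtopology X (W 0)) (pcomp (pre f 1 n) \<beta>)"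
        by (rule pathin_pcomp[OF fW0 \<beta>W]) (simp add: \<beta>)
      have p2: "pathin (subtopology X (W 0)) (pcomp \<alpha> (pcomp (pre f 1 n) \<beta>))"
        by (rule pathin_pcomp[OF \<alpha>W p1]) (simp add: \<alpha>)
      have "path_homotopic X (pre g 1 n) (pcomp \<alpha> (pcomp (pre f 1 n) \<beta>))"
        by (rule rel_inessential_homotopic[OF W[OF n] gW0 p2]) (simp_all add: \<alpha> \<beta>)
      then show ?thesis using \<alpha> True by auto
    next
      case False
      then have m1: "1 \<le> m" and mn: "m < n" and smn: "Suc m \<le> n" using Suc.prems by auto
      obtain \<alpha> where \<alpha>: "pathin (subtopology X (C m)) \<alpha>" "\<alpha> 0 = f (real m / real n)" "\<alpha> 1 = g (real m / real n)"
        and hom: "path_homotopic X (pre g m n) (pcomp \<alpha> (pcomp (pre f m n) \<beta>))"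
        using Suc.IH m1 mn by auto
      obtain \<alpha>' where \<alpha>': "pathin (subtopology X (C (Suc m))) \<alpha>'" "\<alpha>' 0 = f (real (Suc m) / real n)"
          "\<alpha>' 1 = g (real (Suc m) / real n)"
        using path_in_pc[OF C fC gC, of "Suc m"] smn by auto
      have \<alpha>X: "pathin X \<alpha>" and \<alpha>'X: "pathin X \<alpha>'" using \<alpha>(1) \<alpha>'(1) by (auto simp: pathin_subtopology)
      have \<alpha>W: "pathin (subtopology X (W m)) \<alpha>" using pathin_sub_mono[OF \<alpha>(1) CW2[OF mn]] .
      have \<alpha>'W: "pathin (subtopology X (W m)) \<alpha>'" using pathin_sub_mono[OF \<alpha>'(1) CW1[of "Suc m"]] smn by simp
      have sgW: "pathin (subtopology X (W m)) (seg g m n)" by (rule segW[OF g gW[OF mn] smn])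
      have sfW: "pathin (subtopology X (W m)) (seg f m n)" by (rule segW[OF f fW[OF mn] smn])
      have sgX: "pathin X (seg g m n)" and sfX: "pathin X (seg f m n)" using sgW sfW by (auto simp: pathin_subtopology)
      have pgX: "pathin X (pre g m n)" and pfX: "pathin X (pre f m n)" using pathin_pre[OF g] pathin_pre[OF f] mn by auto
      define F where "F = pcomp (pre f m n) \<beta>"
      have FX: "pathin X F" unfolding F_def by (rule pathin_pcomp[OF pfX \<beta>X]) (simp add: \<beta>)
      have F0: "F 0 = g 0" and F1: "F 1 = f (real m / real n)" by (simp_all add: F_def \<beta>)
      have s1: "path_homotopic X (pre g (Suc m) n) (pcomp (seg g m n) (pre g m n))"
        by (rule ph_sym[OF pre_split[OF g smn]])
      have s2: "path_homotopic X (pcomp (seg g m n) (pre g m n)) (pcomp (seg g m n) (pcomp \<alpha> F))"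
        by (rule ph_pcomp[OF ph_refl[OF sgX] hom[folded F_def]]) simp
      have s3: "path_homotopic X (pcomp (seg g m n) (pcomp \<alpha> F)) (pcomp (pcomp (seg g m n) \<alpha>) F)"
        by (rule ph_assoc[OF sgX \<alpha>X FX]) (simp_all add: F1 \<alpha>)
      have s4: "path_homotopic X (pcomp (seg g m n) \<alpha>) (pcomp \<alpha>' (seg f m n))"
      proof (rule rel_inessential_homotopic[OF W[OF mn]])
        show "pathin (subtopology X (W m)) (pcomp (seg g m n) \<alpha>)"
          by (rule pathin_pcomp[OF sgW \<alpha>W]) (simp add: \<alpha>)
        show "pathin (subtopology X (W m)) (pcomp \<alpha>' (seg f m n))"
          by (rule pathin_pcomp[OF \<alpha>'W sfW]) (simp add: \<alpha>')
      qed (simp_all add: \<alpha> \<alpha>')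
      have s5: "path_homotopic X (pcomp (pcomp (seg g m n) \<alpha>) F) (pcomp (pcomp \<alpha>' (seg f m n)) F)"
        by (rule ph_pcomp[OF s4 ph_refl[OF FX]]) (simp add: F1 \<alpha>)
      have s6: "path_homotopic X (pcomp (pcomp \<alpha>' (seg f m n)) F) (pcomp \<alpha>' (pcomp (seg f m n) F))"
        by (rule ph_sym[OF ph_assoc[OF \<alpha>'X sfX FX]]) (simp_all add: F1 \<alpha>')
      have s7a: "path_homotopic X (pcomp (seg f m n) F) (pcomp (pcomp (seg f m n) (pre f m n)) \<beta>)"
        unfolding F_def by (rule ph_assoc[OF sfX pfX \<beta>X]) (simp_all add: \<beta>)
      have s7b: "path_homotopic X (pcomp (pcomp (seg f m n) (pre f m n)) \<beta>) (pcomp (pre f (Suc m) n) \<beta>)"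
        by (rule ph_pcomp[OF pre_split[OF f smn] ph_refl[OF \<beta>X]]) (simp add: \<beta>)
      have s8: "path_homotopic X (pcomp \<alpha>' (pcomp (seg f m n) F)) (pcomp \<alpha>' (pcomp (pre f (Suc m) n) \<beta>))"
        by (rule ph_pcomp[OF ph_refl[OF \<alpha>'X] ph_trans[OF s7a s7b]]) (simp add: \<alpha>')
      have "path_homotopic X (pre g (Suc m) n) (pcomp \<alpha>' (pcomp (pre f (Suc m) n) \<beta>))"
        using s1 s2 s3 s5 s6 s8 by (meson ph_trans)
      then show ?thesis using \<alpha>' by blast
    qed
  qed
  obtain \<alpha> where \<alpha>: "pathin (subtopology X (C n)) \<alpha>" "\<alpha> 0 = f (real n / real n)" "\<alpha> 1 = g (real n / real n)"
    and hom: "path_homotopic X (pre g n n) (pcomp \<alpha> (pcomp (pre f n n) \<beta>))"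
    using IND[of n] n by auto
  have "pre g n n = g" "pre f n n = f" using n by (auto simp: pre_def)
  then show ?thesis using \<alpha> hom \<beta> n by auto
qed

lemma nbhd:
  assumes lpc: "locally_path_connected_space X" and sl: "semilocally_simply_connected X"
    and f: "pathin X f" and U: "openin X U" "f 1 \<in> U" and V: "openin X V" "f 0 \<in> V"
  shows "\<exists>T. openin (CO_topology X) T \<and> f \<in> T \<and>
    (\<forall>g\<in>T. \<exists>\<alpha> \<beta>. pathin (subtopology X U) \<alpha> \<and> \<alpha> 0 = f 1 \<and> \<alpha> 1 = g 1 \<and>
           pathin (subtopology X V) \<beta> \<and> \<beta> 0 = g 0 \<and> \<beta> 1 = f 0 \<and>
           path_homotopic X g (pcomp \<alpha> (pcomp f \<beta>)))"
proof -
  define \<C> where "\<C> = {T. open T \<and> (\<exists>W. openin X W \<and> rel_inessential X W \<and> (\<forall>s\<in>T \<inter> {0..1}. f s \<in> W))}"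
  have cover: "{0..1} \<subseteq> \<Union>\<C>"
  proof
    fix t :: real assume t: "t \<in> {0..1}"
    then have "f t \<in> topspace X" using f by (auto simp: pathin_def continuous_map)
    then obtain W where W: "openin X W" "rel_inessential X W" "f t \<in> W"
      using good_nbhd[OF lpc sl openin_topspace] by blast
    obtain T where T: "open T" "{s \<in> {0..1}. f s \<in> W} = {0..1} \<inter> T"
      using path_preimage_open[OF f W(1)] by blast
    have "T \<in> \<C>" unfolding \<C>_def using T W by blast
    moreover have "t \<in> T" using T(2) t W(3) by blast
    ultimately show "t \<in> \<Union>\<C>" by blast
  qed
  have Cne: "\<C> \<noteq> {}" using cover by auto
  obtain d where d: "0 < d" and leb: "\<And>T. T \<subseteq> {0..1} \<Longrightarrow> diameter T < d \<Longrightarrow> \<exists>B\<in>\<C>. T \<subseteq> B"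
    using Lebesgue_number_lemma[OF compact_Icc Cne cover] unfolding \<C>_def by blast
  obtain n0 :: nat where n0: "inverse (real (Suc n0)) < d" using reals_Archimedean[OF d] by blast
  define n where "n = Suc n0"
  have n: "0 < n" by (simp add: n_def)
  have nd: "1 / real n < d" using n0 by (simp add: n_def inverse_eq_divide)
  define I where "I = (\<lambda>k. {real k / real n..real (Suc k) / real n})"
  have I01: "I k \<subseteq> {0..1}" if "k < n" for k
    using divle1[of "Suc k" n] that by (auto simp: I_def)
  have Idiam: "diameter (I k) < d" for k
  proof -
    have "real k / real n \<le> real (Suc k) / real n" using n by (simp add: divide_right_mono)
    moreover have "real (Suc k) / real n - real k / real n = 1 / real n" using sucdiv[of n k] by linarith
    ultimately show ?thesis using nd by (simp add: I_def)
  qed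
  have exW: "\<exists>W. openin X W \<and> rel_inessential X W \<and> (\<forall>s\<in>I k. f s \<in> W)" if k: "k < n" for k
  proof -
    obtain B where "B \<in> \<C>" "I k \<subseteq> B" using leb[OF I01[OF k] Idiam] by blast
    then show ?thesis using I01[OF k] unfolding \<C>_def by blast
  qed
  have "\<forall>k. \<exists>W. k < n \<longrightarrow> openin X W \<and> rel_inessential X W \<and> (\<forall>s\<in>I k. f s \<in> W)"
    using exW by blast
  then obtain W where W: "\<And>k. k < n \<Longrightarrow> openin X (W k) \<and> rel_inessential X (W k) \<and> (\<forall>s\<in>I k. f s \<in> W k)"
    by (metis choice)
  define E where "E = (\<lambda>k. if k = 0 then W 0 \<inter> V else if k = n then W (n - 1) \<inter> U else W (k - 1) \<inter> W k)"
  have Eo: "openin X (E k)" if "k \<le> n" for k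
    using W[of 0] W[of "n-1"] W[of "k-1"] W[of k] U V n that by (auto simp: E_def)
  have fE: "f (real k / real n) \<in> E k" if k: "k \<le> n" for k
  proof -
    have "k = 0 \<or> k = n \<or> (0 < k \<and> k < n)" using k by auto
    then show ?thesis
    proof (elim disjE conjE)
      assume k0: "k = 0"
      have "0 \<in> I 0" using n by (simp add: I_def)
      then show ?thesis using W[OF n] V k0 by (auto simp: E_def)
    next
      assume kn: "k = n"
      have "real (Suc (n-1)) = real n" using n by simp
      then have "1 \<in> I (n-1)" using n by (simp add: I_def)
      then show ?thesis using W[of "n-1"] U n kn by (auto simp: E_def)
    next
      assume k1: "0 < k" "k < n"
      have "real (Suc (k-1)) = real k" using k1 by simp
      then have "real k / real n \<in> I (k-1)" "real k / real n \<in> I k" using k1 n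
        by (auto simp: I_def divide_right_mono)
      then show ?thesis using W[of "k-1"] W[of k] k1 by (auto simp: E_def)
    qed
  qed
  have exC: "\<exists>C. openin X C \<and> path_connectedin X C \<and> f (real k / real n) \<in> C \<and> C \<subseteq> E k" if k: "k \<le> n" for k
    using lpc Eo[OF k] fE[OF k] unfolding locally_path_connected_space by blast
  have "\<forall>k. \<exists>C. k \<le> n \<longrightarrow> openin X C \<and> path_connectedin X C \<and> f (real k / real n) \<in> C \<and> C \<subseteq> E k"
    using exC by blast
  then obtain C where C: "\<And>k. k \<le> n \<Longrightarrow> openin X (C k) \<and> path_connectedin X (C k) \<and> f (real k / real n) \<in> C k \<and> C k \<subseteq> E k"
    by (metis choice)
  define \<G> where "\<G> = insert (paths X)
       {{f \<in> paths X. f ` K \<subseteq> U} | K U. compact K \<and> K \<subseteq> {0..1} \<and> openin X U}"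
  define T where "T = \<Inter> (insert (paths X) ((\<lambda>k. {g \<in> paths X. g ` I k \<subseteq> W k}) ` {..<n} \<union>
                                             (\<lambda>k. {g \<in> paths X. g ` {real k / real n} \<subseteq> C k}) ` {..n}))"
  have To: "openin (CO_topology X) T"
  proof -
    have "generate_topology_on \<G> T"
      unfolding T_def
    proof (rule generate_topology_on_Inter)
      fix K assume K: "K \<in> insert (paths X) ((\<lambda>k. {g \<in> paths X. g ` I k \<subseteq> W k}) ` {..<n} \<union>
                                             (\<lambda>k. {g \<in> paths X. g ` {real k / real n} \<subseteq> C k}) ` {..n})"
      have "K \<in> \<G>"
      proof -
        from K consider "K = paths X" | k where "k < n" "K = {g \<in> paths X. g ` I k \<subseteq> W k}"
          | k where "k \<le> n" "K = {g \<in> paths X. g ` {real k / real n} \<subseteq> C k}" by auto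
        then show ?thesis
        proof cases
          case 1 then show ?thesis unfolding \<G>_def by simp
        next
          case (2 k)
          have "compact (I k)" by (simp add: I_def)
          then have "K \<in> {{f \<in> paths X. f ` K' \<subseteq> U'} | K' U'. compact K' \<and> K' \<subseteq> {0..1} \<and> openin X U'}"
            using 2 W[OF 2(1)] I01[OF 2(1)] by (intro CollectI exI[of _ "I k"] exI[of _ "W k"]) auto
          then show ?thesis unfolding \<G>_def by (rule insertI2)
        next
          case (3 k)
          have "{real k / real n} \<subseteq> {0..1}" using divle1[OF 3(1)] by simp
          then have "K \<in> {{f \<in> paths X. f ` K' \<subseteq> U'} | K' U'. compact K' \<and> K' \<subseteq> {0..1} \<and> openin X U'}"
            using 3 C[OF 3(1)] by (intro CollectI exI[of _ "{real k / real n}"] exI[of _ "C k"]) auto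
          then show ?thesis unfolding \<G>_def by (rule insertI2)
        qed
      qed
      then show "generate_topology_on \<G> K" by (rule generate_topology_on.Basis)
    qed auto
    then show ?thesis unfolding CO_topology_def \<G>_def by (simp add: openin_topology_generated_by_iff)
  qed
  have fT: "f \<in> T"
    unfolding T_def using f W C by (auto simp: paths_def)
  show ?thesis
  proof (intro exI[of _ T] conjI ballI)
    show "openin (CO_topology X) T" by (rule To)
    show "f \<in> T" by (rule fT)
    fix g assume gT: "g \<in> T"
    have gall: "\<And>K. K \<in> insert (paths X) ((\<lambda>k. {g \<in> paths X. g ` I k \<subseteq> W k}) ` {..<n} \<union>
                                             (\<lambda>k. {g \<in> paths X. g ` {real k / real n} \<subseteq> C k}) ` {..n}) \<Longrightarrow> g \<in> K"
      using gT unfolding T_def by (rule InterD)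
    have g: "pathin X g" using gall[OF insertI1] by (simp add: paths_def)
    have gW: "g ` I k \<subseteq> W k" if k: "k < n" for k
    proof -
      have "g \<in> {g \<in> paths X. g ` I k \<subseteq> W k}"
        by (rule gall, rule insertI2, rule UnI1, rule image_eqI[OF refl]) (use k in simp)
      then show ?thesis by simp
    qed
    have gC: "g (real k / real n) \<in> C k" if k: "k \<le> n" for k
    proof -
      have "g \<in> {g \<in> paths X. g ` {real k / real n} \<subseteq> C k}"
        by (rule gall, rule insertI2, rule UnI2, rule image_eqI[OF refl]) (use k in simp)
      then show ?thesis by simp
    qed
    have CW1: "C k \<subseteq> W (k - 1)" if "1 \<le> k" "k \<le> n" for k
      using C[OF that(2)] that by (auto simp: E_def split: if_splits)
    have CW2: "C k \<subseteq> W k" if "k < n" for k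
      using C[of k] that by (auto simp: E_def split: if_splits)
    obtain \<alpha> \<beta> where \<alpha>: "pathin (subtopology X (C n)) \<alpha>" "\<alpha> 0 = f 1" "\<alpha> 1 = g 1"
      and \<beta>: "pathin (subtopology X (C 0)) \<beta>" "\<beta> 0 = g 0" "\<beta> 1 = f 0"
      and hom: "path_homotopic X g (pcomp \<alpha> (pcomp f \<beta>))"
    proof -
      have "\<exists>\<alpha> \<beta>. pathin (subtopology X (C n)) \<alpha> \<and> \<alpha> 0 = f 1 \<and> \<alpha> 1 = g 1 \<and>
           pathin (subtopology X (C 0)) \<beta> \<and> \<beta> 0 = g 0 \<and> \<beta> 1 = f 0 \<and>
           path_homotopic X g (pcomp \<alpha> (pcomp f \<beta>))"
      proof (rule chain[OF n f g, of W C])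
        show "\<And>k. k < n \<Longrightarrow> rel_inessential X (W k)" using W by blast
        show "\<And>k s. k < n \<Longrightarrow> s \<in> {real k / real n..real (Suc k) / real n} \<Longrightarrow> f s \<in> W k"
          using W unfolding I_def by blast
        show "\<And>k s. k < n \<Longrightarrow> s \<in> {real k / real n..real (Suc k) / real n} \<Longrightarrow> g s \<in> W k"
          using gW unfolding I_def by blast
        show "\<And>k. k \<le> n \<Longrightarrow> path_connectedin X (C k)" using C by blast
        show "\<And>k. k \<le> n \<Longrightarrow> f (real k / real n) \<in> C k" using C by blast
        show "\<And>k. k \<le> n \<Longrightarrow> g (real k / real n) \<in> C k" by (rule gC)
        show "\<And>k. 1 \<le> k \<Longrightarrow> k \<le> n \<Longrightarrow> C k \<subseteq> W (k - 1)" by (rule CW1)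
        show "\<And>k. k < n \<Longrightarrow> C k \<subseteq> W k" by (rule CW2)
      qed
      then show ?thesis using that by blast
    qed
    have CnU: "C n \<subseteq> U" using C[of n] n by (auto simp: E_def)
    have C0V: "C 0 \<subseteq> V" using C[of 0] by (auto simp: E_def)
    show "\<exists>\<alpha> \<beta>. pathin (subtopology X U) \<alpha> \<and> \<alpha> 0 = f 1 \<and> \<alpha> 1 = g 1 \<and>
           pathin (subtopology X V) \<beta> \<and> \<beta> 0 = g 0 \<and> \<beta> 1 = f 0 \<and>
           path_homotopic X g (pcomp \<alpha> (pcomp f \<beta>))"
      using pathin_sub_mono[OF \<alpha>(1) CnU] pathin_sub_mono[OF \<beta>(1) C0V] \<alpha> \<beta> hom by blast
  qed
qed

lemma Nset_open_COq:
  assumes lpc: "locally_path_connected_space X" and sl: "semilocally_simply_connected X"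
    and \<gamma>: "pathin X \<gamma>" and U: "openin X U" and V: "openin X V"
  shows "openin (COq_topology X) (Nset X \<gamma> U V)"
  unfolding openin_COq
proof
  show "Nset X \<gamma> U V \<subseteq> Pi1 X" by (rule Nset_sub[OF \<gamma>])
  show "openin (CO_topology X) {f \<in> paths X. pclass X f \<in> Nset X \<gamma> U V}"
  proof (subst openin_subopen, intro ballI)
    fix f assume "f \<in> {f \<in> paths X. pclass X f \<in> Nset X \<gamma> U V}"
    then have f: "pathin X f" and fN: "pclass X f \<in> Nset X \<gamma> U V" by (auto simp: paths_def)
    then obtain \<delta> \<theta> where cl: "pclass X f = pclass X (pcomp \<delta> (pcomp \<gamma> \<theta>))"
      and \<delta>: "pathin (subtopology X U) \<delta>" "\<delta> 0 = \<gamma> 1"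
      and \<theta>: "pathin (subtopology X V) \<theta>" "\<theta> 1 = \<gamma> 0"
      unfolding Nset_def by blast
    define h where "h = pcomp \<delta> (pcomp \<gamma> \<theta>)"
    have hX: "pathin X h" unfolding h_def by (rule pathin_pcomp_Nset[OF \<gamma> \<delta> \<theta>])
    have hf: "path_homotopic X h f" using pclass_eqD[OF cl[symmetric, folded h_def] f] .
    have e: "f 0 = \<theta> 0" "f 1 = \<delta> 1" using ph_imp[OF hf] by (auto simp: h_def)
    have \<delta>X: "pathin X \<delta>" and \<theta>X: "pathin X \<theta>" using \<delta>(1) \<theta>(1) by (auto simp: pathin_subtopology)
    have f1U: "f 1 \<in> U" using \<delta>(1) e by (auto simp: pathin_subtopology)
    have f0V: "f 0 \<in> V" using \<theta>(1) e by (auto simp: pathin_subtopology)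
    obtain T where T: "openin (CO_topology X) T" "f \<in> T"
      and TT: "\<forall>g\<in>T. \<exists>\<alpha> \<beta>. pathin (subtopology X U) \<alpha> \<and> \<alpha> 0 = f 1 \<and> \<alpha> 1 = g 1 \<and>
           pathin (subtopology X V) \<beta> \<and> \<beta> 0 = g 0 \<and> \<beta> 1 = f 0 \<and>
           path_homotopic X g (pcomp \<alpha> (pcomp f \<beta>))"
      using nbhd[OF lpc sl f U f1U V f0V] by blast
    show "\<exists>T. openin (CO_topology X) T \<and> f \<in> T \<and> T \<subseteq> {f \<in> paths X. pclass X f \<in> Nset X \<gamma> U V}"
    proof (intro exI[of _ T] conjI subsetI)
      show "openin (CO_topology X) T" "f \<in> T" by (rule T)+
      fix g assume gT: "g \<in> T"
      then have gX: "pathin X g" using T(1) topspace_CO openin_subset by (fastforce simp: paths_def)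
      obtain \<alpha> \<beta> where \<alpha>: "pathin (subtopology X U) \<alpha>" "\<alpha> 0 = f 1" "\<alpha> 1 = g 1"
        and \<beta>: "pathin (subtopology X V) \<beta>" "\<beta> 0 = g 0" "\<beta> 1 = f 0"
        and hom: "path_homotopic X g (pcomp \<alpha> (pcomp f \<beta>))"
        using TT gT by blast
      have \<alpha>X: "pathin X \<alpha>" and \<beta>X: "pathin X \<beta>" using \<alpha>(1) \<beta>(1) by (auto simp: pathin_subtopology)
      have gtX: "pathin X (pcomp \<gamma> \<theta>)" by (rule pathin_pcomp[OF \<gamma> \<theta>X]) (simp add: \<theta>)
      define K where "K = pcomp \<gamma> (pcomp \<theta> \<beta>)"
      have tbX: "pathin X (pcomp \<theta> \<beta>)" by (rule pathin_pcomp[OF \<theta>X \<beta>X]) (simp add: \<beta> e)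
      have KX: "pathin X K" unfolding K_def by (rule pathin_pcomp[OF \<gamma> tbX]) (simp add: \<theta>)
      have s1: "path_homotopic X (pcomp f \<beta>) (pcomp h \<beta>)"
        by (rule ph_pcomp[OF ph_sym[OF hf] ph_refl[OF \<beta>X]]) (simp add: \<beta>)
      have s2: "path_homotopic X (pcomp \<alpha> (pcomp f \<beta>)) (pcomp \<alpha> (pcomp h \<beta>))"
        by (rule ph_pcomp[OF ph_refl[OF \<alpha>X] s1]) (simp add: \<alpha>)
      have s3: "path_homotopic X (pcomp h \<beta>) (pcomp \<delta> (pcomp (pcomp \<gamma> \<theta>) \<beta>))"
        unfolding h_def by (rule ph_sym[OF ph_assoc[OF \<delta>X gtX \<beta>X]]) (simp_all add: \<beta> e \<delta>)
      have s4: "path_homotopic X (pcomp (pcomp \<gamma> \<theta>) \<beta>) K"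
        unfolding K_def by (rule ph_sym[OF ph_assoc[OF \<gamma> \<theta>X \<beta>X]]) (simp_all add: \<beta> e \<theta>)
      have s5: "path_homotopic X (pcomp \<delta> (pcomp (pcomp \<gamma> \<theta>) \<beta>)) (pcomp \<delta> K)"
        by (rule ph_pcomp[OF ph_refl[OF \<delta>X] s4]) (simp add: \<delta>)
      have s6: "path_homotopic X (pcomp \<alpha> (pcomp h \<beta>)) (pcomp \<alpha> (pcomp \<delta> K))"
        by (rule ph_pcomp[OF ph_refl[OF \<alpha>X] ph_trans[OF s3 s5]]) (simp add: \<alpha> h_def e)
      have s7: "path_homotopic X (pcomp \<alpha> (pcomp \<delta> K)) (pcomp (pcomp \<alpha> \<delta>) K)"
        by (rule ph_assoc[OF \<alpha>X \<delta>X KX]) (simp_all add: K_def \<delta> \<alpha> e)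
      have gh: "path_homotopic X g (pcomp (pcomp \<alpha> \<delta>) (pcomp \<gamma> (pcomp \<theta> \<beta>)))"
        using hom s2 s6 s7 unfolding K_def by (meson ph_trans)
      have adU: "pathin (subtopology X U) (pcomp \<alpha> \<delta>)"
        by (rule pathin_pcomp[OF \<alpha>(1) \<delta>(1)]) (simp add: \<alpha> e)
      have tbV: "pathin (subtopology X V) (pcomp \<theta> \<beta>)"
        by (rule pathin_pcomp[OF \<theta>(1) \<beta>(1)]) (simp add: \<beta> e)
      have "pclass X g \<in> Nset X \<gamma> U V"
        unfolding Nset_def pclass_eq[OF gh]
        apply (rule CollectI)
        apply (rule exI[of _ "pcomp \<alpha> \<delta>"], rule exI[of _ "pcomp \<theta> \<beta>"])
        using adU tbV \<delta> \<theta> by simp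
      then show "g \<in> {f \<in> paths X. pclass X f \<in> Nset X \<gamma> U V}" using gX by (simp add: paths_def)
    qed
  qed
qed

theorem proposition2p4:
  fixes X :: "'a topology"
  assumes "locally_path_connected_space X"
    and "semilocally_simply_connected X"
  shows "COq_topology X = UC_topology X"
proof -
  have "openin (COq_topology X) S" if S: "openin (UC_topology X) S" for S
  proof -
    have gen: "generate_topology_on (insert (Pi1 X)
       {Nset X \<gamma> U V | \<gamma> U V. pathin X \<gamma> \<and>
          openin X U \<and> \<gamma> 1 \<in> U \<and> path_connectedin X U \<and> rel_inessential X U \<and>
          openin X V \<and> \<gamma> 0 \<in> V \<and> path_connectedin X V \<and> rel_inessential X V}) S"
      using S unfolding UC_topology_def by (simp add: openin_topology_generated_by_iff)
    show ?thesis
    proof (rule generate_topology_on_coarsest[OF istopology_openin _ gen])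
      fix N assume N: "N \<in> insert (Pi1 X)
       {Nset X \<gamma> U V | \<gamma> U V. pathin X \<gamma> \<and>
          openin X U \<and> \<gamma> 1 \<in> U \<and> path_connectedin X U \<and> rel_inessential X U \<and>
          openin X V \<and> \<gamma> 0 \<in> V \<and> path_connectedin X V \<and> rel_inessential X V}"
      show "openin (COq_topology X) N"
      proof (cases "N = Pi1 X")
        case True
        have "{f \<in> paths X. pclass X f \<in> Pi1 X} = topspace (CO_topology X)"
          by (auto simp: topspace_CO Pi1_def)
        then show ?thesis unfolding True openin_COq by simp
      next
        case False
        then obtain \<gamma> U V where "N = Nset X \<gamma> U V" "pathin X \<gamma>" "openin X U" "openin X V"
          using N by blast
        then show ?thesis using Nset_open_COq[OF assms] by simp
      qed
    qed
  qed
  moreover have "openin (UC_topology X) S" if "openin (COq_topology X) S" for S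
    by (rule dir2[OF assms that])
  ultimately show ?thesis by (auto simp: topology_eq)
qed

end
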